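(* Let $S$ be a multiplicative subset of $R$ and $M=R_S$, regarded as an $R$-module. The following are equivalent: (i) $M$ is prime as an $R$-module; (ii) $\mathrm{Ann}_R(M)$ is a prime ideal of $R$; (iii) $R_S$ is an integral domain; (iv) there exists $\mathfrak p\in\mathrm{Spec}(R)$ with $M\ne 0$ and a monomorphism of $R$-modules $M\hookrightarrow\kappa(\mathfrak p)=R_{\mathfrak p}/\mathfrak pR_{\mathfrak p}$.
   Context: $R$ is a commutative Noetherian local ring. A module $M\neq0$ is prime if every $r\in R$ acts on $M$ either as zero or injectively. *)

theory Defs
  imports Main
begin

definition is_ideal :: "'a::comm_ring_1 set \<Rightarrow> bool" where
  "is_ideal I \<longleftrightarrow> 0 \<in> I \<and> (\<forall>x\<in>I. \<forall>y\<in>I. x + y \<in> I) \<and> (\<forall>r. \<forall>x\<in>I. r * x \<in> I)"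

definition prime_ideal :: "'a::comm_ring_1 set \<Rightarrow> bool" where
  "prime_ideal P \<longleftrightarrow> is_ideal P \<and> P \<noteq> UNIV \<and> (\<forall>a b. a * b \<in> P \<longrightarrow> a \<in> P \<or> b \<in> P)"

definition maximal_ideal :: "'a::comm_ring_1 set \<Rightarrow> bool" where
  "maximal_ideal m \<longleftrightarrow> is_ideal m \<and> m \<noteq> UNIV \<and>
     (\<forall>J. is_ideal J \<and> m \<subseteq> J \<longrightarrow> J = m \<or> J = UNIV)"

definition noetherian_ring :: "'a::comm_ring_1 itself \<Rightarrow> bool" where
  "noetherian_ring _ \<longleftrightarrow> (\<forall>f :: nat \<Rightarrow> 'a set.
      (\<forall>n. is_ideal (f n) \<and> f n \<subseteq> f (Suc n)) \<longrightarrow> (\<exists>N. \<forall>n\<ge>N. f n = f N))"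

definition local_ring :: "'a::comm_ring_1 itself \<Rightarrow> bool" where
  "local_ring _ \<longleftrightarrow> (\<exists>!m :: 'a set. maximal_ideal m)"

definition mult_closed :: "'a::comm_ring_1 set \<Rightarrow> bool" where
  "mult_closed S \<longleftrightarrow> 1 \<in> S \<and> (\<forall>s\<in>S. \<forall>t\<in>S. s * t \<in> S)"

record ('r, 'm) rmod =
  mcarrier :: "'m set"
  mzero :: 'm
  madd :: "'m \<Rightarrow> 'm \<Rightarrow> 'm"
  msmul :: "'r \<Rightarrow> 'm \<Rightarrow> 'm"

definition ann :: "('r, 'm) rmod \<Rightarrow> 'r set" where
  "ann M = {r. \<forall>m\<in>mcarrier M. msmul M r m = mzero M}"

definition prime_module :: "('r, 'm) rmod \<Rightarrow> bool" where
  "prime_module M \<longleftrightarrow> mcarrier M \<noteq> {mzero M} \<and>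
     (\<forall>r. (\<forall>m\<in>mcarrier M. msmul M r m = mzero M) \<or> inj_on (msmul M r) (mcarrier M))"

definition mod_hom :: "('r, 'm) rmod \<Rightarrow> ('r, 'n) rmod \<Rightarrow> ('m \<Rightarrow> 'n) \<Rightarrow> bool" where
  "mod_hom M N f \<longleftrightarrow> (\<forall>x\<in>mcarrier M. f x \<in> mcarrier N) \<and>
     (\<forall>x\<in>mcarrier M. \<forall>y\<in>mcarrier M. f (madd M x y) = madd N (f x) (f y)) \<and>
     (\<forall>r. \<forall>x\<in>mcarrier M. f (msmul M r x) = msmul N r (f x))"

definition mod_mono :: "('r, 'm) rmod \<Rightarrow> ('r, 'n) rmod \<Rightarrow> ('m \<Rightarrow> 'n) \<Rightarrow> bool" where
  "mod_mono M N f \<longleftrightarrow> mod_hom M N f \<and> inj_on f (mcarrier M)"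

definition coset :: "('r, 'm) rmod \<Rightarrow> 'm set \<Rightarrow> 'm \<Rightarrow> 'm set" where
  "coset M N x = {madd M x n | n. n \<in> N}"

definition quot_mod :: "('r, 'm) rmod \<Rightarrow> 'm set \<Rightarrow> ('r, 'm set) rmod" where
  "quot_mod M N = \<lparr> mcarrier = coset M N ` mcarrier M,
     mzero = coset M N (mzero M),
     madd = (\<lambda>A B. SOME C. \<exists>x\<in>mcarrier M. \<exists>y\<in>mcarrier M.
                 A = coset M N x \<and> B = coset M N y \<and> C = coset M N (madd M x y)),
     msmul = (\<lambda>r A. SOME C. \<exists>x\<in>mcarrier M. A = coset M N x \<and> C = coset M N (msmul M r x)) \<rparr>"

definition loc_rel :: "'a::comm_ring_1 set \<Rightarrow> (('a \<times> 'a) \<times> ('a \<times> 'a)) set" where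
  "loc_rel S = {((r, s), (r', s')). s \<in> S \<and> s' \<in> S \<and> (\<exists>t\<in>S. t * (r * s' - r' * s) = 0)}"

definition frac :: "'a::comm_ring_1 set \<Rightarrow> 'a \<Rightarrow> 'a \<Rightarrow> ('a \<times> 'a) set" where
  "frac S r s = loc_rel S `` {(r, s)}"

definition loc_carrier :: "'a::comm_ring_1 set \<Rightarrow> ('a \<times> 'a) set set" where
  "loc_carrier S = {frac S r s | r s. s \<in> S}"

definition loc_add :: "'a::comm_ring_1 set \<Rightarrow> ('a \<times> 'a) set \<Rightarrow> ('a \<times> 'a) set \<Rightarrow> ('a \<times> 'a) set" where
  "loc_add S X Y = (SOME Z. \<exists>r s r' s'. s \<in> S \<and> s' \<in> S \<and> X = frac S r s \<and> Y = frac S r' s' \<and>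
                       Z = frac S (r * s' + r' * s) (s * s'))"

definition loc_mult :: "'a::comm_ring_1 set \<Rightarrow> ('a \<times> 'a) set \<Rightarrow> ('a \<times> 'a) set \<Rightarrow> ('a \<times> 'a) set" where
  "loc_mult S X Y = (SOME Z. \<exists>r s r' s'. s \<in> S \<and> s' \<in> S \<and> X = frac S r s \<and> Y = frac S r' s' \<and>
                       Z = frac S (r * r') (s * s'))"

definition loc_smul :: "'a::comm_ring_1 set \<Rightarrow> 'a \<Rightarrow> ('a \<times> 'a) set \<Rightarrow> ('a \<times> 'a) set" where
  "loc_smul S a X = (SOME Z. \<exists>r s. s \<in> S \<and> X = frac S r s \<and> Z = frac S (a * r) s)"

definition loc_mod :: "'a::comm_ring_1 set \<Rightarrow> ('a, ('a \<times> 'a) set) rmod" where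
  "loc_mod S = \<lparr> mcarrier = loc_carrier S, mzero = frac S 0 1,
                 madd = loc_add S, msmul = loc_smul S \<rparr>"

definition loc_domain :: "'a::comm_ring_1 set \<Rightarrow> bool" where
  "loc_domain S \<longleftrightarrow> frac S 1 1 \<noteq> frac S 0 1 \<and>
     (\<forall>X\<in>loc_carrier S. \<forall>Y\<in>loc_carrier S.
        loc_mult S X Y = frac S 0 1 \<longrightarrow> X = frac S 0 1 \<or> Y = frac S 0 1)"

definition ext_max :: "'a::comm_ring_1 set \<Rightarrow> ('a \<times> 'a) set set" where
  "ext_max p = {frac (- p) a s | a s. a \<in> p \<and> s \<in> - p}"

definition kappa :: "'a::comm_ring_1 set \<Rightarrow> ('a, ('a \<times> 'a) set set) rmod" where
  "kappa p = quot_mod (loc_mod (- p)) (ext_max p)"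

end

theory Submission
  imports Defs
begin

lemma mcD: assumes "mult_closed S" shows "1 \<in> S" "s \<in> S \<Longrightarrow> t \<in> S \<Longrightarrow> s*t \<in> S"
  using assms unfolding mult_closed_def by auto

lemma rel_iff: "((a,s),(b,v)) \<in> loc_rel S \<longleftrightarrow> s \<in> S \<and> v \<in> S \<and> (\<exists>t\<in>S. t*(a*v - b*s) = 0)"
  unfolding loc_rel_def by auto

lemma rel_refl: "mult_closed S \<Longrightarrow> s \<in> S \<Longrightarrow> ((a,s),(a,s)) \<in> loc_rel S"
  unfolding rel_iff using mcD by (metis mult_zero_right right_minus_eq)

lemma rel_sym: "((a,s),(b,v)) \<in> loc_rel S \<Longrightarrow> ((b,v),(a,s)) \<in> loc_rel S"
  unfolding rel_iff by (metis add.inverse_neutral minus_diff_eq mult_minus_right)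

lemma rel_trans:
  assumes m: "mult_closed S" and "((a,s),(b,v)) \<in> loc_rel S" "((b,v),(c,w)) \<in> loc_rel S"
  shows "((a,s),(c,w)) \<in> loc_rel S"
proof -
  from assms obtain t t' where t: "t\<in>S" "t*(a*v - b*s) = 0" and t': "t'\<in>S" "t'*(b*w - c*v) = 0"
    and S: "s\<in>S" "v\<in>S" "w\<in>S" unfolding rel_iff by auto
  have "(t*t'*v)*(a*w - c*s) = t'*w*(t*(a*v-b*s)) + t*s*(t'*(b*w-c*v))"
    by (simp add: algebra_simps)
  also have "\<dots> = 0" using t t' by simp
  finally show ?thesis unfolding rel_iff using S t t' mcD[OF m] by blast
qed

lemma frac_eq:
  assumes m: "mult_closed S" and s: "s \<in> S" "v \<in> S"
  shows "frac S a s = frac S b v \<longleftrightarrow> (\<exists>t\<in>S. t*(a*v - b*s) = 0)"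
proof
  assume "frac S a s = frac S b v"
  hence "(b,v) \<in> frac S a s" using rel_refl[OF m s(2)] unfolding frac_def by auto
  thus "\<exists>t\<in>S. t*(a*v - b*s) = 0" unfolding frac_def by (auto simp: rel_iff)
next
  assume "\<exists>t\<in>S. t*(a*v - b*s) = 0"
  hence r: "((a,s),(b,v)) \<in> loc_rel S" unfolding rel_iff using s by auto
  show "frac S a s = frac S b v" unfolding frac_def
  proof (rule set_eqI)
    fix z :: "'a \<times> 'a" obtain x y where z: "z = (x,y)" by (cases z)
    have "((a,s),(x,y)) \<in> loc_rel S \<Longrightarrow> ((b,v),(x,y)) \<in> loc_rel S"
      using rel_trans[OF m rel_sym[OF r]] by blast
    moreover have "((b,v),(x,y)) \<in> loc_rel S \<Longrightarrow> ((a,s),(x,y)) \<in> loc_rel S"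
      using rel_trans[OF m r] by blast
    ultimately show "z \<in> loc_rel S `` {(a, s)} \<longleftrightarrow> z \<in> loc_rel S `` {(b, v)}" unfolding z by blast
  qed
qed

lemma loc_add_frac:
  assumes m: "mult_closed S" and s: "s \<in> S" "v \<in> S"
  shows "loc_add S (frac S a s) (frac S b v) = frac S (a*v+b*s) (s*v)"
proof -
  let ?P = "\<lambda>Z. \<exists>r s' r' s''. s' \<in> S \<and> s'' \<in> S \<and> frac S a s = frac S r s' \<and> frac S b v = frac S r' s'' \<and>
                       Z = frac S (r * s'' + r' * s') (s' * s'')"
  have "?P (frac S (a*v+b*s) (s*v))"
    by (rule exI[where x=a], rule exI[where x=s], rule exI[where x=b], rule exI[where x=v]) (simp add: s)
  hence "?P (Eps ?P)" by (rule someI[where P="?P"])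
  then obtain r1 s1 r2 s2 where h: "s1\<in>S" "s2\<in>S" "frac S a s = frac S r1 s1" "frac S b v = frac S r2 s2"
    "Eps ?P = frac S (r1 * s2 + r2 * s1) (s1 * s2)" by (elim exE conjE) blast
  from h(3) obtain t1 where t1: "t1\<in>S" "t1*(a*s1 - r1*s) = 0" unfolding frac_eq[OF m s(1) h(1)] by blast
  from h(4) obtain t2 where t2: "t2\<in>S" "t2*(b*s2-r2*v) = 0" unfolding frac_eq[OF m s(2) h(2)] by blast
  note t = t1 t2
  have "(t1*t2)*((r1 * s2 + r2 * s1)*(s*v) - (a*v+b*s)*(s1*s2)) =
     - ((t1*(a*s1 - r1*s))*(t2*s2*v) + (t2*(b*s2-r2*v))*(t1*s1*s))" by (simp add: algebra_simps)
  also have "\<dots> = 0" using t by simp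
  finally have "frac S (r1 * s2 + r2 * s1) (s1 * s2) = frac S (a*v+b*s) (s*v)"
    unfolding frac_eq[OF m mcD(2)[OF m h(1,2)] mcD(2)[OF m s]] using mcD(2)[OF m t(1) t(3)] by (rule bexI)
  thus ?thesis unfolding loc_add_def h(5) .
qed

lemma loc_mult_frac:
  assumes m: "mult_closed S" and s: "s \<in> S" "v \<in> S"
  shows "loc_mult S (frac S a s) (frac S b v) = frac S (a*b) (s*v)"
proof -
  let ?P = "\<lambda>Z. \<exists>r s' r' s''. s' \<in> S \<and> s'' \<in> S \<and> frac S a s = frac S r s' \<and> frac S b v = frac S r' s'' \<and>
                       Z = frac S (r * r') (s' * s'')"
  have "?P (frac S (a*b) (s*v))"
    by (rule exI[where x=a], rule exI[where x=s], rule exI[where x=b], rule exI[where x=v]) (simp add: s)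
  hence "?P (Eps ?P)" by (rule someI[where P="?P"])
  then obtain r1 s1 r2 s2 where h: "s1\<in>S" "s2\<in>S" "frac S a s = frac S r1 s1" "frac S b v = frac S r2 s2"
    "Eps ?P = frac S (r1 * r2) (s1 * s2)" by (elim exE conjE) blast
  from h(3) obtain t1 where t1: "t1\<in>S" "t1*(a*s1 - r1*s) = 0" unfolding frac_eq[OF m s(1) h(1)] by blast
  from h(4) obtain t2 where t2: "t2\<in>S" "t2*(b*s2-r2*v) = 0" unfolding frac_eq[OF m s(2) h(2)] by blast
  note t = t1 t2
  have "(t1*t2)*((r1 * r2)*(s*v) - (a*b)*(s1*s2)) =
     - ((t1*(a*s1 - r1*s))*(t2*b*s2) + (t2*(b*s2-r2*v))*(t1*r1*s))" by (simp add: algebra_simps)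
  also have "\<dots> = 0" using t by simp
  finally have "frac S (r1 * r2) (s1 * s2) = frac S (a*b) (s*v)"
    unfolding frac_eq[OF m mcD(2)[OF m h(1,2)] mcD(2)[OF m s]] using mcD(2)[OF m t(1) t(3)] by (rule bexI)
  thus ?thesis unfolding loc_mult_def h(5) .
qed

lemma loc_smul_frac:
  assumes m: "mult_closed S" and s: "s \<in> S"
  shows "loc_smul S c (frac S a s) = frac S (c*a) s"
proof -
  let ?P = "\<lambda>Z. \<exists>r s'. s' \<in> S \<and> frac S a s = frac S r s' \<and> Z = frac S (c * r) s'"
  have "?P (frac S (c*a) s)"
    by (rule exI[where x=a], rule exI[where x=s]) (simp add: s)
  hence "?P (Eps ?P)" by (rule someI[where P="?P"])
  then obtain r1 s1 where h: "s1\<in>S" "frac S a s = frac S r1 s1" "Eps ?P = frac S (c * r1) s1" by (elim exE conjE) blast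
  from h(2) obtain t1 where t: "t1\<in>S" "t1*(a*s1 - r1*s) = 0" unfolding frac_eq[OF m s(1) h(1)] by blast
  have "t1*((c*r1)*s - (c*a)*s1) = - c*(t1*(a*s1 - r1*s))" by (simp add: algebra_simps)
  also have "\<dots> = 0" using t by simp
  finally have "frac S (c * r1) s1 = frac S (c*a) s"
    unfolding frac_eq[OF m h(1) s] using t(1) by (rule bexI)
  thus ?thesis unfolding loc_smul_def h(3) .
qed


definition kerS :: "'a::comm_ring_1 set \<Rightarrow> 'a set" where
  "kerS S = {r. \<exists>t\<in>S. t*r = 0}"

lemma frac_zero:
  assumes m: "mult_closed S" and s: "s \<in> S"
  shows "frac S a s = frac S 0 1 \<longleftrightarrow> a \<in> kerS S"
  unfolding frac_eq[OF m s mcD(1)[OF m]] kerS_def by simp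

lemma loc_carrier_iff: "X \<in> loc_carrier S \<longleftrightarrow> (\<exists>a s. s \<in> S \<and> X = frac S a s)"
  unfolding loc_carrier_def by blast

lemma frac_in: "s \<in> S \<Longrightarrow> frac S a s \<in> loc_carrier S"
  unfolding loc_carrier_iff by blast

lemma ann_eq:
  assumes m: "mult_closed S"
  shows "ann (loc_mod S) = kerS S"
proof (rule set_eqI, rule iffI)
  fix r assume "r \<in> ann (loc_mod S)"
  hence "loc_smul S r (frac S 1 1) = frac S 0 1"
    unfolding ann_def loc_mod_def using frac_in[OF mcD(1)[OF m]] by simp
  hence "frac S (r*1) 1 = frac S 0 1" using loc_smul_frac[OF m mcD(1)[OF m]] by simp
  thus "r \<in> kerS S" using frac_zero[OF m mcD(1)[OF m]] by simp
next
  fix r assume r: "r \<in> kerS S"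
  then obtain t where t: "t \<in> S" "t*r = 0" unfolding kerS_def by blast
  show "r \<in> ann (loc_mod S)" unfolding ann_def loc_mod_def
  proof (simp, intro ballI)
    fix X assume "X \<in> loc_carrier S"
    then obtain a s where as: "s \<in> S" "X = frac S a s" unfolding loc_carrier_iff by blast
    have "t*(r*a) = (t*r)*a" by (simp add: algebra_simps)
    hence "r*a \<in> kerS S" using t unfolding kerS_def by auto
    thus "loc_smul S r X = frac S 0 1" unfolding as(2) loc_smul_frac[OF m as(1)]
      using frac_zero[OF m as(1)] by simp
  qed
qed

lemma kerS_ideal:
  assumes m: "mult_closed S"
  shows "is_ideal (kerS S)"
  unfolding is_ideal_def
proof (intro conjI ballI allI)
  show "0 \<in> kerS S" unfolding kerS_def using mcD(1)[OF m] by auto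
next
  fix x y assume "x \<in> kerS S" "y \<in> kerS S"
  then obtain t t' where t: "t\<in>S" "t*x = 0" "t'\<in>S" "t'*y=0" unfolding kerS_def by blast
  have "(t*t')*(x+y) = t'*(t*x) + t*(t'*y)" by (simp add: algebra_simps)
  thus "x + y \<in> kerS S" unfolding kerS_def using t mcD(2)[OF m t(1) t(3)] by auto
next
  fix r x assume "x \<in> kerS S"
  then obtain t where t: "t\<in>S" "t*x = 0" unfolding kerS_def by blast
  have "t*(r*x) = r*(t*x)" by (simp add: algebra_simps)
  thus "r * x \<in> kerS S" unfolding kerS_def using t by auto
qed

lemma ideal_UNIV: "is_ideal I \<Longrightarrow> I \<noteq> UNIV \<longleftrightarrow> 1 \<notin> I"
  unfolding is_ideal_def by (metis UNIV_I mult.right_neutral  subsetI subset_antisym)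

lemma kerS_prime_iff:
  assumes m: "mult_closed S"
  shows "prime_ideal (kerS S) \<longleftrightarrow> 1 \<notin> kerS S \<and> (\<forall>a b. a*b \<in> kerS S \<longrightarrow> a \<in> kerS S \<or> b \<in> kerS S)"
  unfolding prime_ideal_def using kerS_ideal[OF m] ideal_UNIV[of "kerS S"] by simp

lemma carrier_nontriv:
  assumes m: "mult_closed S"
  shows "loc_carrier S \<noteq> {frac S 0 1} \<longleftrightarrow> 1 \<notin> kerS S"
proof
  assume h: "loc_carrier S \<noteq> {frac S 0 1}"
  show "1 \<notin> kerS S"
  proof
    assume "1 \<in> kerS S"
    hence z: "0 \<in> S" unfolding kerS_def by auto
    have "loc_carrier S = {frac S 0 1}"
    proof (rule set_eqI, rule iffI)
      fix X assume "X \<in> loc_carrier S"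
      then obtain a s where as: "s \<in> S" "X = frac S a s" unfolding loc_carrier_iff by blast
      have "a \<in> kerS S" unfolding kerS_def using z by force
      thus "X \<in> {frac S 0 1}" using frac_zero[OF m as(1)] as by simp
    qed (simp add: frac_in[OF mcD(1)[OF m]])
    thus False using h by simp
  qed
next
  assume "1 \<notin> kerS S"
  hence "frac S 1 1 \<noteq> frac S 0 1" using frac_zero[OF m mcD(1)[OF m]] by simp
  thus "loc_carrier S \<noteq> {frac S 0 1}" using frac_in[OF mcD(1)[OF m], of 1] by auto
qed


lemma smul_zero_iff:
  assumes m: "mult_closed S"
  shows "(\<forall>X\<in>loc_carrier S. loc_smul S r X = frac S 0 1) \<longleftrightarrow> r \<in> kerS S"
  using ann_eq[OF m] unfolding ann_def loc_mod_def by auto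

lemma module_prime:
  assumes m: "mult_closed S"
  shows "prime_module (loc_mod S) \<longleftrightarrow> prime_ideal (kerS S)"
proof
  assume pm: "prime_module (loc_mod S)"
  have pm1: "loc_carrier S \<noteq> {frac S 0 1}" and
    pm2: "\<And>r. (\<forall>X\<in>loc_carrier S. loc_smul S r X = frac S 0 1) \<or> inj_on (loc_smul S r) (loc_carrier S)"
    using pm unfolding prime_module_def loc_mod_def by auto
  have one: "1 \<notin> kerS S" using pm1 carrier_nontriv[OF m] by simp
  have "b \<in> kerS S \<or> a \<in> kerS S" if ab: "a*b \<in> kerS S" for a b
  proof (rule disjCI)
    assume a: "a \<notin> kerS S"
    hence inj: "inj_on (loc_smul S a) (loc_carrier S)" using pm2[of a] smul_zero_iff[OF m] by blast
    have 1: "1 \<in> S" using mcD[OF m] by simp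
    have "loc_smul S a (frac S b 1) = frac S 0 1"
      using loc_smul_frac[OF m 1] frac_zero[OF m 1] ab by simp
    moreover have "loc_smul S a (frac S 0 1) = frac S 0 1"
      using loc_smul_frac[OF m 1] by simp
    ultimately have "frac S b 1 = frac S 0 1"
      using inj frac_in[OF 1] unfolding inj_on_def by metis
    thus "b \<in> kerS S" using frac_zero[OF m 1] by simp
  qed
  thus "prime_ideal (kerS S)" using kerS_prime_iff[OF m] one by blast
next
  assume pi: "prime_ideal (kerS S)"
  hence one: "1 \<notin> kerS S" and pr: "\<And>a b. a*b \<in> kerS S \<Longrightarrow> a \<in> kerS S \<or> b \<in> kerS S"
    using kerS_prime_iff[OF m] by auto
  have "(\<forall>X\<in>loc_carrier S. loc_smul S r X = frac S 0 1) \<or> inj_on (loc_smul S r) (loc_carrier S)" for r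
  proof (cases "r \<in> kerS S")
    case True thus ?thesis using smul_zero_iff[OF m] by blast
  next
    case False
    have "inj_on (loc_smul S r) (loc_carrier S)"
    proof (rule inj_onI)
      fix X Y assume X: "X \<in> loc_carrier S" and Y: "Y \<in> loc_carrier S" and e: "loc_smul S r X = loc_smul S r Y"
      from X obtain a s where as: "s \<in> S" "X = frac S a s" unfolding loc_carrier_iff by blast
      from Y obtain b v where bv: "v \<in> S" "Y = frac S b v" unfolding loc_carrier_iff by blast
      have "frac S (r*a) s = frac S (r*b) v" using e loc_smul_frac[OF m as(1)] loc_smul_frac[OF m bv(1)] as bv by simp
      then obtain t where t: "t \<in> S" "t*(r*a*v - r*b*s) = 0" unfolding frac_eq[OF m as(1) bv(1)] by blast
      have "t*(r*(a*v - b*s)) = t*(r*a*v - r*b*s)" by (simp add: algebra_simps)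
      hence "r*(a*v - b*s) \<in> kerS S" using t unfolding kerS_def by auto
      hence "a*v - b*s \<in> kerS S" using pr False by blast
      then obtain u where "u \<in> S" "u*(a*v - b*s) = 0" unfolding kerS_def by blast
      thus "X = Y" unfolding as bv frac_eq[OF m as(1) bv(1)] by blast
    qed
    thus ?thesis by blast
  qed
  moreover have "loc_carrier S \<noteq> {frac S 0 1}" using one carrier_nontriv[OF m] by simp
  ultimately show "prime_module (loc_mod S)" unfolding prime_module_def loc_mod_def by simp
qed

lemma domain_iff:
  assumes m: "mult_closed S"
  shows "loc_domain S \<longleftrightarrow> prime_ideal (kerS S)"
proof
  assume d: "loc_domain S"
  have 1: "1 \<in> S" using mcD[OF m] by simp
  have one: "1 \<notin> kerS S" using d frac_zero[OF m 1] unfolding loc_domain_def by simp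
  have "a \<in> kerS S \<or> b \<in> kerS S" if ab: "a*b \<in> kerS S" for a b
  proof -
    have "loc_mult S (frac S a 1) (frac S b 1) = frac S 0 1"
      using loc_mult_frac[OF m 1 1] frac_zero[OF m mcD(2)[OF m 1 1]] ab by simp
    hence "frac S a 1 = frac S 0 1 \<or> frac S b 1 = frac S 0 1"
      using d frac_in[OF 1] unfolding loc_domain_def by blast
    thus ?thesis using frac_zero[OF m 1] by simp
  qed
  thus "prime_ideal (kerS S)" using kerS_prime_iff[OF m] one by blast
next
  assume pi: "prime_ideal (kerS S)"
  hence one: "1 \<notin> kerS S" and pr: "\<And>a b. a*b \<in> kerS S \<Longrightarrow> a \<in> kerS S \<or> b \<in> kerS S"
    using kerS_prime_iff[OF m] by auto
  have 1: "1 \<in> S" using mcD[OF m] by simp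
  have "X = frac S 0 1 \<or> Y = frac S 0 1"
    if X: "X \<in> loc_carrier S" and Y: "Y \<in> loc_carrier S" and e: "loc_mult S X Y = frac S 0 1" for X Y
  proof -
    from X obtain a s where as: "s \<in> S" "X = frac S a s" unfolding loc_carrier_iff by blast
    from Y obtain b v where bv: "v \<in> S" "Y = frac S b v" unfolding loc_carrier_iff by blast
    have "frac S (a*b) (s*v) = frac S 0 1" using e loc_mult_frac[OF m as(1) bv(1)] as bv by simp
    hence "a*b \<in> kerS S" using frac_zero[OF m mcD(2)[OF m as(1) bv(1)]] by simp
    thus ?thesis using pr frac_zero[OF m as(1)] frac_zero[OF m bv(1)] as bv by blast
  qed
  moreover have "frac S 1 1 \<noteq> frac S 0 1" using one frac_zero[OF m 1] by simp
  ultimately show "loc_domain S" unfolding loc_domain_def by blast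
qed


lemma pI:
  assumes "prime_ideal p"
  shows "0 \<in> p" "x \<in> p \<Longrightarrow> y \<in> p \<Longrightarrow> x + y \<in> p" "x \<in> p \<Longrightarrow> r * x \<in> p"
    "1 \<notin> p" "a * b \<in> p \<Longrightarrow> a \<in> p \<or> b \<in> p"
  using assms ideal_UNIV[of p] unfolding prime_ideal_def is_ideal_def by auto

lemma p_lin: "prime_ideal p \<Longrightarrow> x \<in> p \<Longrightarrow> y \<in> p \<Longrightarrow> r*x + q*y \<in> p"
  using pI by blast

lemma p_eq: "prime_ideal p \<Longrightarrow> z = r*x + q*y \<Longrightarrow> x \<in> p \<Longrightarrow> y \<in> p \<Longrightarrow> z \<in> p"
  using p_lin by blast

lemma p_neg: "prime_ideal p \<Longrightarrow> x \<in> p \<Longrightarrow> - x \<in> p"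
  using pI(3)[of p x "-1"] by simp

lemma p_cancel: "prime_ideal p \<Longrightarrow> s \<notin> p \<Longrightarrow> s * x \<in> p \<Longrightarrow> x \<in> p"
  using pI(5) by blast

lemma prime_mc: "prime_ideal p \<Longrightarrow> mult_closed (- p)"
  unfolding mult_closed_def using pI(4,5) by blast

definition cl :: "'a::comm_ring_1 set \<Rightarrow> 'a \<Rightarrow> 'a \<Rightarrow> ('a \<times> 'a) set set" where
  "cl p a s = coset (loc_mod (- p)) (ext_max p) (frac (- p) a s)"

lemma coset_mem:
  assumes p: "prime_ideal p" and s: "s \<notin> p" and y: "y \<in> cl p a s"
  shows "\<exists>e w. w \<notin> p \<and> y = frac (- p) e w \<and> a*w - e*s \<in> p"
proof -
  have m: "mult_closed (- p)" using prime_mc[OF p] .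
  from y obtain n where n: "n \<in> ext_max p" "y = loc_add (- p) (frac (- p) a s) n"
    unfolding cl_def coset_def loc_mod_def by auto
  from n(1) obtain c u where cu: "c \<in> p" "u \<notin> p" "n = frac (- p) c u" unfolding ext_max_def by auto
  have "y = frac (- p) (a*u + c*s) (s*u)" using n(2) cu(3) loc_add_frac[OF m] s cu(2) by simp
  moreover have "s*u \<notin> p" using mcD(2)[OF m] s cu(2) by simp
  moreover have "a*(s*u) - (a*u + c*s)*s \<in> p"
    by (rule p_eq[OF p _ cu(1) cu(1), where r="-s*s" and q=0]) (simp add: algebra_simps)
  ultimately show ?thesis by blast
qed

lemma mem_coset:
  assumes p: "prime_ideal p" and v: "v \<notin> p" and w: "w \<notin> p" and d: "b*w - e*v \<in> p"
  shows "frac (- p) e w \<in> cl p b v"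
proof -
  have m: "mult_closed (- p)" using prime_mc[OF p] .
  have vw: "v*w \<in> - p" using mcD(2)[OF m] v w by simp
  have c: "e*v - b*w \<in> p" using p_neg[OF p d] by (simp add: algebra_simps)
  have n: "frac (- p) (e*v - b*w) (v*w) \<in> ext_max p" unfolding ext_max_def using c vw by blast
  have "loc_add (- p) (frac (- p) b v) (frac (- p) (e*v - b*w) (v*w)) = frac (- p) (b*(v*w) + (e*v - b*w)*v) (v*(v*w))"
    using loc_add_frac[OF m] v vw by simp
  also have "\<dots> = frac (- p) e w"
  proof -
    have vvw: "v*(v*w) \<in> - p" using mcD(2)[OF m _ vw] v by simp
    have w': "w \<in> - p" using w by simp
    have "(1::'a)*((b*(v*w) + (e*v - b*w)*v)*w - e*(v*(v*w))) = 0" by (simp add: algebra_simps)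
    thus ?thesis using frac_eq[OF m vvw w'] mcD(1)[OF m] by blast
  qed
  finally show ?thesis unfolding cl_def coset_def loc_mod_def using n by force
qed

lemma cl_sub:
  assumes p: "prime_ideal p" and s: "s \<notin> p" and v: "v \<notin> p" and d: "a*v - b*s \<in> p"
  shows "cl p a s \<subseteq> cl p b v"
proof
  fix y assume "y \<in> cl p a s"
  then obtain e w where ew: "w \<notin> p" "y = frac (- p) e w" "a*w - e*s \<in> p" using coset_mem[OF p s] by blast
  have "s*(b*w - e*v) \<in> p"
    by (rule p_eq[OF p _ d ew(3), where r="-w" and q=v]) (simp add: algebra_simps)
  hence "b*w - e*v \<in> p" using p_cancel[OF p s] by blast
  thus "y \<in> cl p b v" using mem_coset[OF p v ew(1)] ew(2) by simp
qed

lemma cl_eq: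
  assumes p: "prime_ideal p" and s: "s \<notin> p" and v: "v \<notin> p"
  shows "cl p a s = cl p b v \<longleftrightarrow> a*v - b*s \<in> p"
proof
  assume e: "cl p a s = cl p b v"
  have m: "mult_closed (- p)" using prime_mc[OF p] .
  have "a*s - a*s \<in> p" using pI(1)[OF p] by simp
  hence "frac (- p) a s \<in> cl p a s" using mem_coset[OF p s s, of a a] by simp
  hence "frac (- p) a s \<in> cl p b v" using e by simp
  then obtain e w where ew: "w \<notin> p" "frac (- p) a s = frac (- p) e w" "b*w - e*v \<in> p"
    using coset_mem[OF p v] by blast
  then obtain t where t: "t \<notin> p" "t*(a*w - e*s) = 0" using frac_eq[OF m, of s w a e] s by auto
  have h1: "a*w - e*s \<in> p" using p_cancel[OF p t(1)] t(2) pI(1)[OF p] by simp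
  have "w*(a*v - b*s) \<in> p"
    by (rule p_eq[OF p _ h1 ew(3), where r=v and q="-s"]) (simp add: algebra_simps)
  thus "a*v - b*s \<in> p" using p_cancel[OF p ew(1)] by blast
next
  assume d: "a*v - b*s \<in> p"
  have "b*s - a*v \<in> p" using p_neg[OF p d] by (simp add: algebra_simps)
  thus "cl p a s = cl p b v" using cl_sub[OF p s v d] cl_sub[OF p v s] by blast
qed


lemma lm_simps: "mcarrier (loc_mod S) = loc_carrier S" "mzero (loc_mod S) = frac S 0 1"
  "madd (loc_mod S) = loc_add S" "msmul (loc_mod S) = loc_smul S"
  by (simp_all add: loc_mod_def)

lemma kappa_carrier: "X \<in> mcarrier (kappa p) \<longleftrightarrow> (\<exists>a s. s \<notin> p \<and> X = cl p a s)"
proof -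
  have "mcarrier (kappa p) = coset (loc_mod (- p)) (ext_max p) ` loc_carrier (- p)"
    by (simp add: kappa_def quot_mod_def lm_simps)
  thus ?thesis unfolding cl_def loc_carrier_def by blast
qed

lemma kappa_zero: "mzero (kappa p) = cl p 0 1"
  unfolding kappa_def quot_mod_def cl_def by (simp add: lm_simps)

lemma kappa_smul:
  assumes p: "prime_ideal p" and s: "s \<notin> p"
  shows "msmul (kappa p) r (cl p a s) = cl p (r*a) s"
proof -
  have m: "mult_closed (- p)" using prime_mc[OF p] .
  let ?C = "coset (loc_mod (- p)) (ext_max p)"
  let ?P = "\<lambda>C. \<exists>x\<in>loc_carrier (- p). cl p a s = ?C x \<and> C = ?C (loc_smul (- p) r x)"
  have d: "msmul (kappa p) r (cl p a s) = Eps ?P"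
    by (simp add: kappa_def quot_mod_def lm_simps)
  have s': "s \<in> - p" using s by simp
  have "?P (cl p (r*a) s)" unfolding cl_def
    by (rule bexI[where x="frac (- p) a s"]) (simp_all add: loc_smul_frac[OF m s'] frac_in[OF s'])
  hence "?P (Eps ?P)" by (rule someI[where P="?P"])
  then obtain x where x: "x \<in> loc_carrier (- p)" "cl p a s = ?C x" "Eps ?P = ?C (loc_smul (- p) r x)" by blast
  from x(1) obtain a' s' where as: "s' \<in> - p" "x = frac (- p) a' s'" unfolding loc_carrier_iff by blast
  have e1: "cl p a s = cl p a' s'" using x(2) as(2) unfolding cl_def by simp
  have e2: "Eps ?P = cl p (r*a') s'" using x(3) as loc_smul_frac[OF m as(1)] unfolding cl_def by simp
  have h1: "a*s' - a'*s \<in> p" using e1 cl_eq[OF p s] as(1) by simp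
  have "(r*a')*s - (r*a)*s' \<in> p"
    by (rule p_eq[OF p _ h1 pI(1)[OF p], where r="-r" and q=0]) (simp add: algebra_simps)
  hence "cl p (r*a') s' = cl p (r*a) s" using cl_eq[OF p _ s] as(1) by simp
  thus ?thesis using d e2 by simp
qed

lemma kappa_add:
  assumes p: "prime_ideal p" and s: "s \<notin> p" and v: "v \<notin> p"
  shows "madd (kappa p) (cl p a s) (cl p b v) = cl p (a*v + b*s) (s*v)"
proof -
  have m: "mult_closed (- p)" using prime_mc[OF p] .
  let ?C = "coset (loc_mod (- p)) (ext_max p)"
  let ?P = "\<lambda>C. \<exists>x\<in>loc_carrier (- p). \<exists>y\<in>loc_carrier (- p). cl p a s = ?C x \<and> cl p b v = ?C y \<and> C = ?C (loc_add (- p) x y)"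
  have d: "madd (kappa p) (cl p a s) (cl p b v) = Eps ?P"
    by (simp add: kappa_def quot_mod_def lm_simps)
  have s': "s \<in> - p" and v': "v \<in> - p" using s v by simp_all
  have "?P (cl p (a*v + b*s) (s*v))" unfolding cl_def
    by (rule bexI[where x="frac (- p) a s"], rule bexI[where x="frac (- p) b v"])
       (simp_all add: loc_add_frac[OF m s' v'] frac_in[OF s'] frac_in[OF v'])
  hence "?P (Eps ?P)" by (rule someI[where P="?P"])
  then obtain x y where x: "x \<in> loc_carrier (- p)" "y \<in> loc_carrier (- p)" "cl p a s = ?C x" "cl p b v = ?C y"
     "Eps ?P = ?C (loc_add (- p) x y)" by blast
  from x(1) obtain a' s' where as: "s' \<in> - p" "x = frac (- p) a' s'" unfolding loc_carrier_iff by blast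
  from x(2) obtain b' v' where bv: "v' \<in> - p" "y = frac (- p) b' v'" unfolding loc_carrier_iff by blast
  have e1: "cl p a s = cl p a' s'" using x(3) as(2) unfolding cl_def by simp
  have e1': "cl p b v = cl p b' v'" using x(4) bv(2) unfolding cl_def by simp
  have e2: "Eps ?P = cl p (a'*v' + b'*s') (s'*v')" using x(5) as bv loc_add_frac[OF m as(1) bv(1)] unfolding cl_def by simp
  have h1: "a*s' - a'*s \<in> p" using e1 cl_eq[OF p s] as(1) by simp
  have h2: "b*v' - b'*v \<in> p" using e1' cl_eq[OF p v] bv(1) by simp
  have "(a'*v' + b'*s')*(s*v) - (a*v + b*s)*(s'*v') \<in> p"
    by (rule p_eq[OF p _ h1 h2, where r="-(v*v')" and q="-(s*s')"]) (simp add: algebra_simps)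
  moreover have "s'*v' \<notin> p" "s*v \<notin> p" using mcD(2)[OF m] as(1) bv(1) s' v' by auto
  ultimately have "cl p (a'*v' + b'*s') (s'*v') = cl p (a*v + b*s) (s*v)" using cl_eq[OF p] by blast
  thus ?thesis using d e2 by simp
qed


lemma smul_closed: "mult_closed S \<Longrightarrow> X \<in> loc_carrier S \<Longrightarrow> loc_smul S r X \<in> loc_carrier S"
  unfolding loc_carrier_iff using loc_smul_frac by metis

lemma iv_to_i:
  assumes m: "mult_closed S" and p: "prime_ideal p" and nt: "loc_carrier S \<noteq> {frac S 0 1}"
    and f: "mod_mono (loc_mod S) (kappa p) f"
  shows "prime_module (loc_mod S)"
proof -
  have fin: "\<And>x. x \<in> loc_carrier S \<Longrightarrow> f x \<in> mcarrier (kappa p)"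
    and fsm: "\<And>r x. x \<in> loc_carrier S \<Longrightarrow> f (loc_smul S r x) = msmul (kappa p) r (f x)"
    and inj: "inj_on f (loc_carrier S)"
    using f unfolding mod_mono_def mod_hom_def lm_simps by auto
  have 1: "1 \<in> S" using mcD[OF m] by simp
  have p1: "(1::'a) \<notin> p" using pI(4)[OF p] .
  define Z where "Z = frac S (0::'a) 1"
  have Zc: "Z \<in> loc_carrier S" unfolding Z_def using frac_in[OF 1] .
  have fcl: "\<exists>a s. s \<notin> p \<and> f X = cl p a s" if "X \<in> loc_carrier S" for X
    using fin[OF that] kappa_carrier by blast
  have smul0: "f (loc_smul S r X) = cl p 0 1" if X: "X \<in> loc_carrier S" and r: "r \<in> p" for X r
  proof -
    obtain a s where as: "s \<notin> p" "f X = cl p a s" using fcl[OF X] by blast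
    have "f (loc_smul S r X) = cl p (r*a) s" using fsm[OF X] as kappa_smul[OF p as(1)] by simp
    also have "\<dots> = cl p 0 1" using cl_eq[OF p as(1) p1] pI(3)[OF p r, of a] by (simp add: mult.commute)
    finally show ?thesis .
  qed
  have fZ: "f Z = cl p 0 1"
  proof -
    have "loc_smul S 0 Z = Z" unfolding Z_def using loc_smul_frac[OF m 1] by simp
    thus ?thesis using smul0[OF Zc pI(1)[OF p]] by simp
  qed
  have "(\<forall>X\<in>loc_carrier S. loc_smul S r X = Z) \<or> inj_on (loc_smul S r) (loc_carrier S)" for r
  proof (cases "r \<in> p")
    case True
    have "loc_smul S r X = Z" if X: "X \<in> loc_carrier S" for X
      using inj smul_closed[OF m X] Zc smul0[OF X True] fZ unfolding inj_on_def by metis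
    thus ?thesis by blast
  next
    case False
    have "inj_on (loc_smul S r) (loc_carrier S)"
    proof (rule inj_onI)
      fix X Y assume X: "X \<in> loc_carrier S" and Y: "Y \<in> loc_carrier S" and e: "loc_smul S r X = loc_smul S r Y"
      obtain a s where as: "s \<notin> p" "f X = cl p a s" using fcl[OF X] by blast
      obtain b v where bv: "v \<notin> p" "f Y = cl p b v" using fcl[OF Y] by blast
      have "cl p (r*a) s = cl p (r*b) v"
        using fsm[OF X, of r] fsm[OF Y, of r] e as bv kappa_smul[OF p as(1)] kappa_smul[OF p bv(1)] by simp
      hence "(r*a)*v - (r*b)*s \<in> p" using cl_eq[OF p as(1) bv(1)] by simp
      moreover have "(r*a)*v - (r*b)*s = r*(a*v - b*s)" by (simp add: algebra_simps)
      ultimately have "a*v - b*s \<in> p" using p_cancel[OF p False] by simp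
      hence "f X = f Y" using as bv cl_eq[OF p as(1) bv(1)] by simp
      thus "X = Y" using inj X Y unfolding inj_on_def by blast
    qed
    thus ?thesis by blast
  qed
  thus ?thesis unfolding prime_module_def lm_simps Z_def using nt by blast
qed

lemma iii_to_iv:
  assumes m: "mult_closed S" and pi: "prime_ideal (kerS S)"
  shows "\<exists>f. mod_mono (loc_mod S) (kappa (kerS S)) f"
proof -
  define P where "P = kerS S"
  have p: "prime_ideal P" using pi P_def by simp
  have SP: "s \<notin> P" if s: "s \<in> S" for s
  proof
    assume "s \<in> P"
    then obtain t where t: "t \<in> S" "t*s = 0" unfolding P_def kerS_def by blast
    hence "0 \<in> S" using mcD(2)[OF m t(1) s] by simp
    hence "1 \<in> P" unfolding P_def kerS_def by force
    thus False using pI(4)[OF p] by simp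
  qed
  define f where "f X = cl P (fst (SOME z. z \<in> X)) (snd (SOME z. z \<in> X))" for X :: "('a \<times> 'a) set"
  have ff: "f (frac S a s) = cl P a s" if s: "s \<in> S" for a s
  proof -
    have "(a,s) \<in> frac S a s" unfolding frac_def using rel_refl[OF m s] by simp
    hence z: "(SOME z. z \<in> frac S a s) \<in> frac S a s" by (rule someI)
    obtain e w where ew: "(SOME z. z \<in> frac S a s) = (e,w)" by (cases "SOME z. z \<in> frac S a s")
    have "((a,s),(e,w)) \<in> loc_rel S" using z ew unfolding frac_def by simp
    then obtain t where t: "w \<in> S" "t \<in> S" "t*(a*w - e*s) = 0" unfolding rel_iff by blast
    have "a*w - e*s \<in> P" unfolding P_def kerS_def using t by blast
    hence "cl P a s = cl P e w" using cl_eq[OF p SP[OF s] SP[OF t(1)]] by simp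
    thus ?thesis unfolding f_def ew by simp
  qed
  have "mod_mono (loc_mod S) (kappa P) f"
    unfolding mod_mono_def mod_hom_def lm_simps
  proof (intro conjI ballI allI)
    fix x assume "x \<in> loc_carrier S"
    then obtain a s where as: "s \<in> S" "x = frac S a s" unfolding loc_carrier_iff by blast
    show "f x \<in> mcarrier (kappa P)" unfolding as ff[OF as(1)] kappa_carrier using SP[OF as(1)] by blast
  next
    fix x y assume "x \<in> loc_carrier S" "y \<in> loc_carrier S"
    then obtain a s b v where as: "s \<in> S" "x = frac S a s" "v \<in> S" "y = frac S b v" unfolding loc_carrier_iff by blast
    show "f (loc_add S x y) = madd (kappa P) (f x) (f y)"
      unfolding as loc_add_frac[OF m as(1) as(3)] ff[OF as(1)] ff[OF as(3)] ff[OF mcD(2)[OF m as(1) as(3)]]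
      using kappa_add[OF p SP[OF as(1)] SP[OF as(3)]] by simp
  next
    fix r x assume "x \<in> loc_carrier S"
    then obtain a s where as: "s \<in> S" "x = frac S a s" unfolding loc_carrier_iff by blast
    show "f (loc_smul S r x) = msmul (kappa P) r (f x)"
      unfolding as loc_smul_frac[OF m as(1)] ff[OF as(1)]
      using kappa_smul[OF p SP[OF as(1)]] by simp
  next
    show "inj_on f (loc_carrier S)"
    proof (rule inj_onI)
      fix x y assume "x \<in> loc_carrier S" "y \<in> loc_carrier S" and e: "f x = f y"
      then obtain a s b v where as: "s \<in> S" "x = frac S a s" "v \<in> S" "y = frac S b v" unfolding loc_carrier_iff by blast
      have "a*v - b*s \<in> P" using e cl_eq[OF p SP[OF as(1)] SP[OF as(3)]] unfolding as ff[OF as(1)] ff[OF as(3)] by simp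
      then obtain t where "t \<in> S" "t*(a*v - b*s) = 0" unfolding P_def kerS_def by blast
      thus "x = y" unfolding as frac_eq[OF m as(1) as(3)] by blast
    qed
  qed
  thus ?thesis unfolding P_def by blast
qed

theorem lemma1p6:
  fixes S :: "'a::comm_ring_1 set"
  assumes "noetherian_ring TYPE('a)"
    and "local_ring TYPE('a)"
    and "mult_closed S"
  shows "(prime_module (loc_mod S) \<longleftrightarrow> prime_ideal (ann (loc_mod S)))
       \<and> (prime_ideal (ann (loc_mod S)) \<longleftrightarrow> loc_domain S)
       \<and> (loc_domain S \<longleftrightarrow>
            (\<exists>p. prime_ideal p \<and> mcarrier (loc_mod S) \<noteq> {mzero (loc_mod S)} \<and>
                 (\<exists>f. mod_mono (loc_mod S) (kappa p) f)))"
proof -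
  have m: "mult_closed S" by fact
  have A: "ann (loc_mod S) = kerS S" using ann_eq[OF m] .
  have iv: "loc_domain S \<longleftrightarrow>
            (\<exists>p. prime_ideal p \<and> mcarrier (loc_mod S) \<noteq> {mzero (loc_mod S)} \<and>
                 (\<exists>f. mod_mono (loc_mod S) (kappa p) f))"
  proof
    assume "loc_domain S"
    hence pi: "prime_ideal (kerS S)" using domain_iff[OF m] by simp
    hence "mcarrier (loc_mod S) \<noteq> {mzero (loc_mod S)}"
      unfolding lm_simps using carrier_nontriv[OF m] kerS_prime_iff[OF m] by simp
    thus "\<exists>p. prime_ideal p \<and> mcarrier (loc_mod S) \<noteq> {mzero (loc_mod S)} \<and>
                 (\<exists>f. mod_mono (loc_mod S) (kappa p) f)" using pi iii_to_iv[OF m pi] by blast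
  next
    assume "\<exists>p. prime_ideal p \<and> mcarrier (loc_mod S) \<noteq> {mzero (loc_mod S)} \<and>
                 (\<exists>f. mod_mono (loc_mod S) (kappa p) f)"
    then obtain p f where p: "prime_ideal p" "loc_carrier S \<noteq> {frac S 0 1}" "mod_mono (loc_mod S) (kappa p) f"
      unfolding lm_simps by blast
    have "prime_module (loc_mod S)" using iv_to_i[OF m p] .
    thus "loc_domain S" using module_prime[OF m] domain_iff[OF m] by simp
  qed
  show ?thesis using module_prime[OF m] domain_iff[OF m] A iv by simp
qed

end
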